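(* Let $n\ge 1$ and let $\tau\in \mathrm{RT}(n)$. In dimension $d=1$ one has $F(\tau)=G(\pi(\tau))$, i.e. for all $f_1,\dots,f_n\in C^\infty(\mathbb{R},\mathbb{R})$, $$F(\tau)(f_1,\dots,f_n)=f_1^{(\varphi_\tau(1))}\cdots f_n^{(\varphi_\tau(n))},$$ where $\varphi_\tau(v)$ is the number of children of the vertex $v$ in $\tau$.
   Context: A rooted tree on a finite vertex set $V\subset\mathbb{N}$ is a set $E$ of ordered pairs of elements of $V$ (an edge $(v,w)$ means $w$ is a child of $v$) such that exactly one vertex $r$ (the root) has no parent, every other vertex $w$ has exactly one parent (exactly one $v$ with $(v,w)\in E$), and every vertex is connected to the root by following parents. $C_v=\{w:(v,w)\in E\}$ is the set of children of $v$; for $v\in V$, $\tau_v$ is the subtree consisting of $v$ and all vertices above it (descendants), with the induced edges. $\mathrm{RT}(n)$ is the set of rooted trees with vertex set $[n]=\{1,\dots,n\}$. Elementary differentials: let $\mathcal{C}_d=C^\infty(\mathbb{R}^d,\mathbb{R}^d)$, $g_j$ the $j$-th coordinate of $g$, $\partial_j=\partial/\partial x_j$. For a rooted tree $\tau$ on $V$ with root $r$ whose children are $v_1,\dots,v_k$, and for $f^i\in\mathcal{C}_d$ ($i\in V$), define recursively $$F(\tau)((f^i)_{i\in V})=\sum_{j_1,\dots,j_k=1}^d F(\tau_{v_1})((f^i)_{i\in V(\tau_{v_1})})_{j_1}\cdots F(\tau_{v_k})((f^i)_{i\in V(\tau_{v_k})})_{j_k}\,\partial_{j_1}\cdots\partial_{j_k}f^r$$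 (for a single vertex, $F(\tau)=f^r$). For $d=1$ this is an $n$-linear map $C^\infty(\mathbb{R},\mathbb{R})^n\to C^\infty(\mathbb{R},\mathbb{R})$. A multi-index on $[n]$ is a map $\varphi:[n]\to\mathbb{N}$ with $\sum_{v}\varphi(v)=n-1$; $\mathrm{MI}(n)$ is the set of these. The map $\pi:\mathrm{RT}(n)\to\mathrm{MI}(n)$ sends $\tau$ to $\varphi_\tau$, $\varphi_\tau(v)=|C_v|$. For $\varphi\in\mathrm{MI}(n)$, $G(\varphi)(f_1,\dots,f_n)=f_1^{(\varphi(1))}\cdots f_n^{(\varphi(n))}$, where $f^{(k)}$ is the $k$-th derivative. *)

theory Defs
  imports "HOL-Analysis.Analysis"
begin

text \<open>Rooted trees: a set E of ordered pairs (v,w), meaning w is a child of v.\<close>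

definition has_parent :: "(nat \<times> nat) set \<Rightarrow> nat \<Rightarrow> bool" where
  "has_parent E w \<longleftrightarrow> (\<exists>v. (v, w) \<in> E)"

definition is_rooted_tree :: "nat set \<Rightarrow> (nat \<times> nat) set \<Rightarrow> bool" where
  "is_rooted_tree V E \<longleftrightarrow>
     finite V \<and> E \<subseteq> V \<times> V \<and>
     (\<exists>!r. r \<in> V \<and> \<not> has_parent E r) \<and>
     (\<forall>w\<in>V. has_parent E w \<longrightarrow> (\<exists>!v. (v, w) \<in> E)) \<and>
     (\<forall>r\<in>V. \<not> has_parent E r \<longrightarrow> (\<forall>w\<in>V. (r, w) \<in> E\<^sup>*))"

definition tree_root :: "nat set \<Rightarrow> (nat \<times> nat) set \<Rightarrow> nat" where
  "tree_root V E = (THE r. r \<in> V \<and> \<not> has_parent E r)"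

definition children :: "(nat \<times> nat) set \<Rightarrow> nat \<Rightarrow> nat set" where
  "children E v = {w. (v, w) \<in> E}"

definition RT :: "nat \<Rightarrow> (nat \<times> nat) set set" where
  "RT n = {E. is_rooted_tree {1..n} E}"

definition MI :: "nat \<Rightarrow> (nat \<Rightarrow> nat) set" where
  "MI n = {\<phi>. (\<Sum>v=1..n. \<phi> v) = n - 1}"

definition tree_pi :: "(nat \<times> nat) set \<Rightarrow> nat \<Rightarrow> nat" where
  "tree_pi E = (\<lambda>v. card (children E v))"

definition smooth_fun :: "(real \<Rightarrow> real) \<Rightarrow> bool" where
  "smooth_fun f \<longleftrightarrow> (\<forall>k x. ((deriv ^^ k) f) differentiable (at x))"

text \<open>Elementary differential in dimension d = 1. For d = 1 the sum over
  j_1..j_k ranges over the single index 1, so the recursion reads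
  F(tau_v) = F(tau_{v_1}) * ... * F(tau_{v_k}) * f_v^{(k)}.
  elem_diff1 E f v g  means  g = F(tau_v)((f i)_{i in V(tau_v)}).\<close>
inductive elem_diff1 :: "(nat \<times> nat) set \<Rightarrow> (nat \<Rightarrow> real \<Rightarrow> real) \<Rightarrow> nat \<Rightarrow> (real \<Rightarrow> real) \<Rightarrow> bool"
  for E f where
  "(\<forall>c\<in>children E v. elem_diff1 E f c (g c)) \<Longrightarrow>
   elem_diff1 E f v (\<lambda>x. (\<Prod>c\<in>children E v. g c x) * (deriv ^^ card (children E v)) (f v) x)"

definition F1 :: "nat set \<Rightarrow> (nat \<times> nat) set \<Rightarrow> (nat \<Rightarrow> real \<Rightarrow> real) \<Rightarrow> real \<Rightarrow> real" where
  "F1 V E f = (THE g. elem_diff1 E f (tree_root V E) g)"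

definition G :: "nat \<Rightarrow> (nat \<Rightarrow> nat) \<Rightarrow> (nat \<Rightarrow> real \<Rightarrow> real) \<Rightarrow> real \<Rightarrow> real" where
  "G n \<phi> f = (\<lambda>x. \<Prod>i=1..n. (deriv ^^ \<phi> i) (f i) x)"

end

theory Submission
  imports Defs
begin

locale rtree =
  fixes V :: "nat set" and E :: "(nat \<times> nat) set" and r :: nat
  assumes finV: "finite V" and EV: "E \<subseteq> V \<times> V" and rV: "r \<in> V"
    and rnp: "\<not> has_parent E r"
    and upar: "\<And>v v' w. (v, w) \<in> E \<Longrightarrow> (v', w) \<in> E \<Longrightarrow> v = v'"
    and reach: "\<And>w. w \<in> V \<Longrightarrow> (r, w) \<in> E\<^sup>*"
begin

definition dp :: "nat \<Rightarrow> nat" where "dp w = (LEAST k. (r, w) \<in> E ^^ k)"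

definition desc :: "nat \<Rightarrow> nat set" where "desc v = {w. (v, w) \<in> E\<^sup>*}"

lemma dp_path: "w \<in> V \<Longrightarrow> (r, w) \<in> E ^^ dp w"
  unfolding dp_def using reach rtrancl_power by (metis LeastI)

lemma dp_min: "(r, w) \<in> E ^^ k \<Longrightarrow> dp w \<le> k"
  unfolding dp_def by (rule Least_le)

lemma dp_edge: assumes "(v, w) \<in> E" shows "dp w = Suc (dp v)"
proof -
  have vV: "v \<in> V" and wV: "w \<in> V" using assms EV by auto
  have "(r, w) \<in> E ^^ Suc (dp v)" using dp_path[OF vV] assms by auto
  hence le: "dp w \<le> Suc (dp v)" by (rule dp_min)
  have p: "(r, w) \<in> E ^^ dp w" using dp_path[OF wV] .
  have "dp w \<noteq> 0"
  proof
    assume "dp w = 0" then have "w = r" using p by simp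
    then show False using assms rnp unfolding has_parent_def by blast
  qed
  then obtain k where k: "dp w = Suc k" by (cases "dp w") auto
  with p obtain u where "(r, u) \<in> E ^^ k" "(u, w) \<in> E" by auto
  moreover then have "u = v" using upar assms by blast
  ultimately have "dp v \<le> k" using dp_min by blast
  with k le show ?thesis by simp
qed

lemma dp_pathk: "(a, w) \<in> E ^^ k \<Longrightarrow> dp w = dp a + k"
proof (induction k arbitrary: w)
  case 0 then show ?case by simp
next
  case (Suc k)
  then obtain u where "(a, u) \<in> E ^^ k" "(u, w) \<in> E" by auto
  then show ?case using Suc.IH dp_edge by fastforce
qed

lemma desc_ge: assumes "w \<in> desc a" shows "dp a \<le> dp w"
proof -
  have "(a, w) \<in> E\<^sup>*" using assms unfolding desc_def by simp
  then obtain k where "(a, w) \<in> E ^^ k" using rtrancl_power by blast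
  then have "dp w = dp a + k" by (rule dp_pathk)
  then show ?thesis by simp
qed

lemma path_uniq: "(a, w) \<in> E ^^ k \<Longrightarrow> (b, w) \<in> E ^^ k \<Longrightarrow> a = b"
proof (induction k arbitrary: w)
  case 0 then show ?case by simp
next
  case (Suc k)
  from Suc.prems(1) obtain u where u: "(a, u) \<in> E ^^ k" "(u, w) \<in> E"
    using relpow_Suc_E by metis
  from Suc.prems(2) obtain u' where u': "(b, u') \<in> E ^^ k" "(u', w) \<in> E"
    using relpow_Suc_E by metis
  have "u = u'" using upar u u' by blast
  then show ?case using Suc.IH u u' by blast
qed

lemma child_notin: assumes "c \<in> children E v" shows "v \<notin> desc c"
proof
  assume "v \<in> desc c"
  then have "dp c \<le> dp v" by (rule desc_ge)
  moreover have "dp c = Suc (dp v)" using assms dp_edge unfolding children_def by simp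
  ultimately show False by simp
qed

lemma child_disj: assumes "c1 \<in> children E v" "c2 \<in> children E v" "c1 \<noteq> c2"
  shows "desc c1 \<inter> desc c2 = {}"
proof (rule ccontr)
  assume "desc c1 \<inter> desc c2 \<noteq> {}"
  then obtain w where "(c1, w) \<in> E\<^sup>*" "(c2, w) \<in> E\<^sup>*" unfolding desc_def by auto
  then obtain k1 k2 where k: "(c1, w) \<in> E ^^ k1" "(c2, w) \<in> E ^^ k2"
    using rtrancl_power by blast
  have "dp c1 = dp c2" using assms dp_edge unfolding children_def by simp
  moreover have "dp w = dp c1 + k1" "dp w = dp c2 + k2" using k dp_pathk by blast+
  ultimately have "k1 = k2" by simp
  then show False using k path_uniq assms(3) by blast
qed

lemma desc_sub: "desc v \<subseteq> insert v V"
proof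
  fix w assume "w \<in> desc v"
  then have "(v, w) \<in> E\<^sup>*" unfolding desc_def by simp
  then show "w \<in> insert v V" by (induction rule: rtrancl_induct) (use EV in auto)
qed

lemma desc_fin: "finite (desc v)"
  using desc_sub finV finite_subset by blast

lemma children_fin: "finite (children E v)"
proof -
  have "children E v \<subseteq> V" using EV unfolding children_def by auto
  then show ?thesis using finV finite_subset by blast
qed

lemma desc_unfold: "desc v = insert v (\<Union>c\<in>children E v. desc c)"
proof
  show "desc v \<subseteq> insert v (\<Union>c\<in>children E v. desc c)"
  proof
    fix w assume "w \<in> desc v"
    then have "(v, w) \<in> E\<^sup>*" unfolding desc_def by simp
    then show "w \<in> insert v (\<Union>c\<in>children E v. desc c)"
    proof (cases rule: converse_rtranclE)
      case base then show ?thesis by simp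
    next
      case (step c) then show ?thesis unfolding children_def desc_def by blast
    qed
  qed
  show "insert v (\<Union>c\<in>children E v. desc c) \<subseteq> desc v"
    unfolding children_def desc_def by (auto intro: converse_rtrancl_into_rtrancl)
qed

definition P :: "(nat \<Rightarrow> real \<Rightarrow> real) \<Rightarrow> nat \<Rightarrow> real \<Rightarrow> real" where
  "P f v = (\<lambda>x. \<Prod>w\<in>desc v. (deriv ^^ card (children E w)) (f w) x)"

lemma P_unfold:
  "P f v x = (\<Prod>c\<in>children E v. P f c x) * (deriv ^^ card (children E v)) (f v) x"
proof -
  let ?h = "\<lambda>w. (deriv ^^ card (children E w)) (f w) x"
  have nin: "v \<notin> (\<Union>c\<in>children E v. desc c)" using child_notin by blast
  have "P f v x = prod ?h (insert v (\<Union>c\<in>children E v. desc c))"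
    unfolding P_def by (subst desc_unfold) simp
  also have "\<dots> = ?h v * prod ?h (\<Union>c\<in>children E v. desc c)"
    using nin children_fin desc_fin by (simp add: prod.insert)
  also have "prod ?h (\<Union>c\<in>children E v. desc c) = (\<Prod>c\<in>children E v. prod ?h (desc c))"
    by (rule prod.UNION_disjoint) (use children_fin desc_fin child_disj in auto)
  finally show ?thesis unfolding P_def by (simp add: mult.commute)
qed

lemma ed_uniq: "elem_diff1 E f v g \<Longrightarrow> g = P f v"
proof (induction rule: elem_diff1.induct)
  case (1 v g)
  show ?case
  proof
    fix x
    have "\<forall>c\<in>children E v. g c x = P f c x" using 1 by simp
    then have "(\<Prod>c\<in>children E v. g c x) = (\<Prod>c\<in>children E v. P f c x)"
      by (intro prod.cong) auto
    then show "(\<lambda>x. (\<Prod>c\<in>children E v. g c x) * (deriv ^^ card (children E v)) (f v) x) x = P f v x"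
      by (simp only: P_unfold[of f v x])
  qed
qed

lemma ed_ex: "elem_diff1 E f v (P f v)"
proof (induction "card (desc v)" arbitrary: v rule: less_induct)
  case less
  have "\<forall>c\<in>children E v. elem_diff1 E f c (P f c)"
  proof
    fix c assume c: "c \<in> children E v"
    have "desc c \<subseteq> desc v" by (subst (2) desc_unfold) (use c in blast)
    moreover have "v \<in> desc v" by (subst desc_unfold) simp
    moreover have "v \<notin> desc c" using child_notin[OF c] .
    ultimately have "desc c \<subset> desc v" by auto
    then have "card (desc c) < card (desc v)" using desc_fin psubset_card_mono by blast
    then show "elem_diff1 E f c (P f c)" using less by blast
  qed
  then have "elem_diff1 E f v (\<lambda>x. (\<Prod>c\<in>children E v. P f c x) * (deriv ^^ card (children E v)) (f v) x)"
    by (rule elem_diff1.intros)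
  moreover have "(\<lambda>x. (\<Prod>c\<in>children E v. P f c x) * (deriv ^^ card (children E v)) (f v) x) = P f v"
    by (rule ext) (simp only: P_unfold[of f v])
  ultimately show ?case by simp
qed

lemma the_ed: "(THE g. elem_diff1 E f v g) = P f v"
  by (rule the_equality) (rule ed_ex, erule ed_uniq)

lemma desc_root: "desc r = V"
proof
  show "desc r \<subseteq> V" using desc_sub rV by blast
  show "V \<subseteq> desc r" using reach unfolding desc_def by blast
qed

end

theorem proposition2p6:
  fixes n :: nat and E :: "(nat \<times> nat) set" and f :: "nat \<Rightarrow> real \<Rightarrow> real"
  assumes "n \<ge> 1" and "E \<in> RT n"
    and "\<forall>i\<in>{1..n}. smooth_fun (f i)"
  shows "F1 {1..n} E f = G n (tree_pi E) f"
proof -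
  have T: "is_rooted_tree {1..n} E" using assms(2) unfolding RT_def by simp
  note T' = T[unfolded is_rooted_tree_def]
  have EV: "E \<subseteq> {1..n} \<times> {1..n}" by (rule T'[THEN conjunct2, THEN conjunct1])
  have ex: "\<exists>!r. r \<in> {1..n} \<and> \<not> has_parent E r"
    by (rule T'[THEN conjunct2, THEN conjunct2, THEN conjunct1])
  have up: "\<forall>w\<in>{1..n}. has_parent E w \<longrightarrow> (\<exists>!v. (v, w) \<in> E)"
    by (rule T'[THEN conjunct2, THEN conjunct2, THEN conjunct2, THEN conjunct1])
  have re: "\<forall>r\<in>{1..n}. \<not> has_parent E r \<longrightarrow> (\<forall>w\<in>{1..n}. (r, w) \<in> E\<^sup>*)"
    by (rule T'[THEN conjunct2, THEN conjunct2, THEN conjunct2, THEN conjunct2])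
  define r where "r = tree_root {1..n} E"
  have rr: "r \<in> {1..n} \<and> \<not> has_parent E r"
    unfolding r_def tree_root_def by (rule theI') (rule ex)
  then have r: "r \<in> {1..n}" "\<not> has_parent E r" by simp_all
  have root: "tree_root {1..n} E = r" by (simp add: r_def)
  interpret rtree "{1..n}" E r
  proof
    show "finite {1..n}" by simp
    show "E \<subseteq> {1..n} \<times> {1..n}" by (rule EV)
    show "r \<in> {1..n}" "\<not> has_parent E r" using r by auto
    show "v = v'" if "(v, w) \<in> E" "(v', w) \<in> E" for v v' w
    proof -
      have "w \<in> {1..n}" "has_parent E w" using that EV unfolding has_parent_def by auto
      then have "\<exists>!v. (v, w) \<in> E" using up by simp
      then obtain v0 where h: "\<And>y. (y, w) \<in> E \<Longrightarrow> y = v0" by (elim ex1E) blast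
      have "v = v0" by (rule h) (rule that(1))
      moreover have "v' = v0" by (rule h) (rule that(2))
      ultimately show ?thesis by simp
    qed
    show "(r, w) \<in> E\<^sup>*" if "w \<in> {1..n}" for w
      using re that r by simp
  qed
  have "F1 {1..n} E f = P f r" unfolding F1_def root by (rule the_ed)
  also have "\<dots> = G n (tree_pi E) f"
    unfolding P_def G_def tree_pi_def desc_root by simp
  finally show ?thesis .
qed

end
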